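(* Let $G$ be a maximal outerplanar graph with at least four vertices. Let $uv$ be an edge on its outer face with $\deg_G(u)>2$ and $\deg_G(v)>2$, let $w=\Delta(uv)$, and let $G_u=G_u(uv)$ and $G_v=G_v(uv)$ be the $uv$-segments. If $\mathrm{mvc}(G)=\mathrm{mvc}(G_u)+\mathrm{mvc}(G_v)$, then $$\mathrm{mvc}_u(G)=\min\{\mathrm{mvc}_u(G_u)+\mathrm{mvc}(G_v),\ \mathrm{mvc}(G_u)+\mathrm{mvc}_w(G_v),\ \mathrm{mvc}(G)+1\},$$ $$\mathrm{mvc}_v(G)=\min\{\mathrm{mvc}(G_u)+\mathrm{mvc}_v(G_v),\ \mathrm{mvc}_w(G_u)+\mathrm{mvc}(G_v),\ \mathrm{mvc}(G)+1\},$$ $$\mathrm{mvc}_{uv}(G)=\min\{\mathrm{mvc}_u(G_u)+\mathrm{mvc}_v(G_v),\ \mathrm{mvc}(G)+1\}.$$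
   Context: All graphs are finite and simple. A maximal outerplanar graph is an outerplanar graph to which no edge between existing vertices can be added while keeping it outerplanar. A fixed outerplanar embedding, with all vertices on the outer face, is assumed. For $S\subseteq V(G)$, $\mathrm{mvc}_S(G)$ is the minimum size of a vertex cover of $G$ containing $S$, and $\mathrm{mvc}(G)=\mathrm{mvc}_\emptyset(G)$. Braces are dropped for small sets, e.g. $\mathrm{mvc}_{uw}(G)=\mathrm{mvc}_{\{u,w\}}(G)$. For an edge $uv$ on the outer face of a maximal outerplanar graph with at least three vertices, $\Delta(uv)$ is the unique common neighbor of $u$ and $v$. $uv$-segments: let $w=\Delta(uv)$. $G_u(uv)$ is the maximal biconnected outerplanar subgraph of $G$ that has $uw$ on its outer face and does not contain $v$. Equivalently, it is the subgraph induced by $u$, $w$ and the vertices on the side of edge $uw$ not containing $v$; it is the single edge $uw$ if $\deg_G(u)=2$. $G_v(uv)$ is defined symmetrically. *)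

theory Defs
  imports Main
begin

definition simple_graph :: "'a set \<Rightarrow> ('a \<Rightarrow> 'a \<Rightarrow> bool) \<Rightarrow> bool" where
  "simple_graph V E \<longleftrightarrow> finite V \<and> (\<forall>x y. E x y \<longrightarrow> E y x) \<and> (\<forall>x. \<not> E x x)
     \<and> (\<forall>x y. E x y \<longrightarrow> x \<in> V \<and> y \<in> V)"

definition degree :: "'a set \<Rightarrow> ('a \<Rightarrow> 'a \<Rightarrow> bool) \<Rightarrow> 'a \<Rightarrow> nat" where
  "degree V E x = card {y \<in> V. E x y}"

text \<open>Outerplanar (convex) embedding: vertices placed on a circle in the cyclic order given
  by pos (positions 0..n-1); edges drawn as chords, no two of which cross.\<close>
definition outer_emb :: "'a set \<Rightarrow> ('a \<Rightarrow> 'a \<Rightarrow> bool) \<Rightarrow> ('a \<Rightarrow> nat) \<Rightarrow> bool" where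
  "outer_emb V E pos \<longleftrightarrow> bij_betw pos V {0..<card V} \<and>
     (\<forall>a\<in>V. \<forall>b\<in>V. \<forall>c\<in>V. \<forall>d\<in>V. E a b \<longrightarrow> E c d \<longrightarrow>
        \<not> (pos a < pos c \<and> pos c < pos b \<and> pos b < pos d))"

definition outerplanar :: "'a set \<Rightarrow> ('a \<Rightarrow> 'a \<Rightarrow> bool) \<Rightarrow> bool" where
  "outerplanar V E \<longleftrightarrow> (\<exists>pos. outer_emb V E pos)"

definition add_edge :: "('a \<Rightarrow> 'a \<Rightarrow> bool) \<Rightarrow> 'a \<Rightarrow> 'a \<Rightarrow> ('a \<Rightarrow> 'a \<Rightarrow> bool)" where
  "add_edge E x y = (\<lambda>a b. E a b \<or> (a = x \<and> b = y) \<or> (a = y \<and> b = x))"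

definition maximal_outerplanar :: "'a set \<Rightarrow> ('a \<Rightarrow> 'a \<Rightarrow> bool) \<Rightarrow> bool" where
  "maximal_outerplanar V E \<longleftrightarrow> simple_graph V E \<and> outerplanar V E \<and>
     (\<forall>x\<in>V. \<forall>y\<in>V. x \<noteq> y \<longrightarrow> \<not> E x y \<longrightarrow> \<not> outerplanar V (add_edge E x y))"

text \<open>Edge xy lies on the outer face of the embedding: x, y consecutive in the cyclic order.\<close>
definition outer_edge :: "'a set \<Rightarrow> ('a \<Rightarrow> nat) \<Rightarrow> 'a \<Rightarrow> 'a \<Rightarrow> bool" where
  "outer_edge V pos x y \<longleftrightarrow> pos y = (pos x + 1) mod card V \<or> pos x = (pos y + 1) mod card V"

text \<open>cyclic strict betweenness: b lies strictly inside the arc going from a to c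
  in increasing cyclic direction.\<close>
definition cbetw :: "nat \<Rightarrow> nat \<Rightarrow> nat \<Rightarrow> bool" where
  "cbetw a b c \<longleftrightarrow> (a < b \<and> b < c) \<or> (b < c \<and> c < a) \<or> (c < a \<and> a < b)"

text \<open>Vertex set of the segment G_x(xy) with w = Delta(xy): x, w and the vertices on the side
  of the chord xw not containing y.\<close>
definition seg_vertices :: "'a set \<Rightarrow> ('a \<Rightarrow> nat) \<Rightarrow> 'a \<Rightarrow> 'a \<Rightarrow> 'a \<Rightarrow> 'a set" where
  "seg_vertices V pos x w y = {x, w} \<union>
     {z \<in> V. z \<noteq> x \<and> z \<noteq> w \<and> cbetw (pos x) (pos z) (pos w) \<noteq> cbetw (pos x) (pos y) (pos w)}"

text \<open>Vertex covers of the subgraph induced on V (edges of E with both ends in V).\<close>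
definition is_vc :: "'a set \<Rightarrow> ('a \<Rightarrow> 'a \<Rightarrow> bool) \<Rightarrow> 'a set \<Rightarrow> bool" where
  "is_vc V E C \<longleftrightarrow> C \<subseteq> V \<and> (\<forall>x\<in>V. \<forall>y\<in>V. E x y \<longrightarrow> x \<in> C \<or> y \<in> C)"

definition mvcS :: "'a set \<Rightarrow> ('a \<Rightarrow> 'a \<Rightarrow> bool) \<Rightarrow> 'a set \<Rightarrow> nat" where
  "mvcS V E S = (LEAST k. \<exists>C. is_vc V E C \<and> S \<subseteq> C \<and> card C = k)"

definition mvc :: "'a set \<Rightarrow> ('a \<Rightarrow> 'a \<Rightarrow> bool) \<Rightarrow> nat" where
  "mvc V E = mvcS V E {}"

end

theory Submission
  imports Defs
begin

lemma vc_ex: "finite V \<Longrightarrow> S \<subseteq> V \<Longrightarrow> \<exists>C. is_vc V E C \<and> S \<subseteq> C \<and> card C = mvcS V E S"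
proof -
  assume "finite V" "S \<subseteq> V"
  have "\<exists>k C. is_vc V E C \<and> S \<subseteq> C \<and> card C = k"
    using \<open>S \<subseteq> V\<close> by (auto simp: is_vc_def)
  then show ?thesis unfolding mvcS_def by (rule LeastI_ex)
qed

lemma vc_le: "is_vc V E C \<Longrightarrow> S \<subseteq> C \<Longrightarrow> mvcS V E S \<le> card C"
  unfolding mvcS_def by (rule Least_le) blast

lemma vc_mono: "is_vc V E C \<Longrightarrow> C \<subseteq> D \<Longrightarrow> D \<subseteq> V \<Longrightarrow> is_vc V E D"
  unfolding is_vc_def by blast

lemma comb1:
  assumes fin: "finite V" and SuV: "Su \<subseteq> V" and SvV: "Sv \<subseteq> V" and un: "Su \<union> Sv = V"
    and int: "Su \<inter> Sv = {w}" and uSu: "u \<in> Su" and vSv: "v \<in> Sv" and uw: "u \<noteq> w" and vw: "v \<noteq> w"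
    and Euw: "E u w" and Evw: "E v w" and Euv: "E u v"
    and edges: "\<forall>x\<in>V. \<forall>y\<in>V. E x y \<longrightarrow> (x\<in>Su \<and> y\<in>Su) \<or> (x\<in>Sv \<and> y\<in>Sv) \<or> (x=u \<and> y=v) \<or> (x=v \<and> y=u)"
    and hyp: "mvc V E = mvc Su E + mvc Sv E"
  shows "mvcS V E {u} = min (mvcS Su E {u} + mvc Sv E) (min (mvc Su E + mvcS Sv E {w}) (mvc V E + 1))"
    and "mvcS V E {u,v} = min (mvcS Su E {u} + mvcS Sv E {v}) (mvc V E + 1)"
proof -
  have wS: "w\<in>Su" "w\<in>Sv" using int by auto
  have finS: "finite Su" "finite Sv" using fin SuV SvV finite_subset by auto
  have uV: "u \<in> V" and vV: "v \<in> V" and wV: "w \<in> V" using uSu vSv wS SuV SvV by auto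
  have restr: "\<And>C X. is_vc V E C \<Longrightarrow> X \<subseteq> V \<Longrightarrow> is_vc X E (C \<inter> X)"
    by (auto simp: is_vc_def)
  have glue: "is_vc V E (A \<union> B)" if A: "is_vc Su E A" and B: "is_vc Sv E B" and uv: "u \<in> A \<or> v \<in> B" for A B
  proof -
    have "A \<union> B \<subseteq> V" using A B SuV SvV by (auto simp: is_vc_def)
    moreover have "x \<in> A \<union> B \<or> y \<in> A \<union> B" if "x\<in>V" "y\<in>V" "E x y" for x y
      using edges that A B uv unfolding is_vc_def by blast
    ultimately show ?thesis unfolding is_vc_def by blast
  qed
  have cardU: "card (A\<union>B) + (if w\<in>A \<and> w\<in>B then 1 else 0) = card A + card B"
    if "A \<subseteq> Su" "B \<subseteq> Sv" for A B
  proof -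
    have fA: "finite A" "finite B" using that finS finite_subset by auto
    have "A \<inter> B \<subseteq> {w}" using that int by auto
    hence "A \<inter> B = (if w\<in>A \<and> w\<in>B then {w} else {})" by auto
    thus ?thesis using card_Un_Int[OF fA] by auto
  qed
  have cardC: "card C + (if w\<in>C then 1 else 0) = card (C\<inter>Su) + card (C\<inter>Sv)" if "C \<subseteq> V" for C
  proof -
    have "C = (C\<inter>Su) \<union> (C\<inter>Sv)" using that un by auto
    thus ?thesis using cardU[of "C\<inter>Su" "C\<inter>Sv"] wS by auto
  qed
  have isC: "C \<subseteq> V" if "is_vc V E C" for C using that by (auto simp: is_vc_def)
  note ex = vc_ex[OF fin] vc_ex[OF finS(1)] vc_ex[OF finS(2)]
  obtain M where M: "is_vc V E M" "card M = mvc V E" using ex(1)[of "{}"] unfolding mvc_def by auto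
  have finM: "finite M" using isC[OF M(1)] fin finite_subset by auto
  obtain Au where Au: "is_vc Su E Au" "u \<in> Au" "card Au = mvcS Su E {u}" using ex(2)[of "{u}"] uSu by auto
  obtain A0 where A0: "is_vc Su E A0" "card A0 = mvc Su E" using ex(2)[of "{}"] unfolding mvc_def by auto
  obtain Aw where Aw: "is_vc Su E Aw" "w \<in> Aw" "card Aw = mvcS Su E {w}" using ex(2)[of "{w}"] wS by auto
  obtain Bv where Bv: "is_vc Sv E Bv" "v \<in> Bv" "card Bv = mvcS Sv E {v}" using ex(3)[of "{v}"] vSv by auto
  obtain B0 where B0: "is_vc Sv E B0" "card B0 = mvc Sv E" using ex(3)[of "{}"] unfolding mvc_def by auto
  obtain Bw where Bw: "is_vc Sv E Bw" "w \<in> Bw" "card Bw = mvcS Sv E {w}" using ex(3)[of "{w}"] wS by auto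
  have sub: "X \<subseteq> Su" if "is_vc Su E X" for X using that by (auto simp: is_vc_def)
  have subv: "X \<subseteq> Sv" if "is_vc Sv E X" for X using that by (auto simp: is_vc_def)
  have minA: "mvc Su E \<le> card X" if "is_vc Su E X" for X using vc_le[OF that, of "{}"] unfolding mvc_def by auto
  have minB: "mvc Sv E \<le> card X" if "is_vc Sv E X" for X using vc_le[OF that, of "{}"] unfolding mvc_def by auto
  have minV: "mvc V E \<le> card X" if "is_vc V E X" for X using vc_le[OF that, of "{}"] unfolding mvc_def by auto
  have coverw: "u \<in> X \<or> w \<in> X" if "is_vc Su E X" for X using that Euw uSu wS unfolding is_vc_def by blast
  have coverwv: "v \<in> X \<or> w \<in> X" if "is_vc Sv E X" for X using that Evw vSv wS unfolding is_vc_def by blast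
  have u1: "mvcS V E {u} \<le> mvcS Su E {u} + mvc Sv E"
  proof -
    have "is_vc V E (Au \<union> B0)" using glue Au B0 by blast
    moreover have "card (Au \<union> B0) \<le> card Au + card B0" using cardU[OF sub[OF Au(1)] subv[OF B0(1)]] by simp
    ultimately show ?thesis using vc_le[of V E "Au \<union> B0" "{u}"] Au B0 by auto
  qed
  have u2: "mvcS V E {u} \<le> mvc Su E + mvcS Sv E {w}"
  proof -
    have A': "is_vc Su E (insert u A0)" using vc_mono[OF A0(1)] sub[OF A0(1)] uSu by auto
    have "is_vc V E (insert u A0 \<union> Bw)" using glue A' Bw by blast
    moreover have "card (insert u A0 \<union> Bw) \<le> card A0 + card Bw"
    proof (cases "u \<in> A0")
      case True thus ?thesis using cardU[OF sub[OF A0(1)] subv[OF Bw(1)]] by (simp add: insert_absorb)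
    next
      case False
      hence "w \<in> A0" using coverw A0 by blast
      hence "card (insert u A0 \<union> Bw) + 1 = card (insert u A0) + card Bw"
        using cardU[OF sub[OF A'] subv[OF Bw(1)]] Bw by simp
      moreover have "card (insert u A0) = card A0 + 1"
        using False finite_subset[OF sub[OF A0(1)] finS(1)] by simp
      ultimately show ?thesis by simp
    qed
    ultimately show ?thesis using vc_le[of V E "insert u A0 \<union> Bw" "{u}"] A0 Bw by auto
  qed
  have u3: "mvcS V E {u} \<le> mvc V E + 1"
  proof -
    have "is_vc V E (insert u M)" using vc_mono[OF M(1)] isC[OF M(1)] uV by auto
    moreover have "card (insert u M) \<le> card M + 1" using finM by (simp add: card_insert_if)
    ultimately show ?thesis using vc_le[of V E "insert u M" "{u}"] M by auto
  qed
  have l1: "min (mvcS Su E {u} + mvc Sv E) (min (mvc Su E + mvcS Sv E {w}) (mvc V E + 1)) \<le> mvcS V E {u}"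
  proof -
    obtain C where C: "is_vc V E C" "u \<in> C" "card C = mvcS V E {u}" using ex(1)[of "{u}"] uV by auto
    let ?A = "C \<inter> Su" and ?B = "C \<inter> Sv"
    have A: "is_vc Su E ?A" "u \<in> ?A" using restr[OF C(1) SuV] C uSu by auto
    have B: "is_vc Sv E ?B" using restr[OF C(1) SvV] by auto
    have cc: "card C + (if w\<in>C then 1 else 0) = card ?A + card ?B" using cardC[OF isC[OF C(1)]] .
    have a1: "mvcS Su E {u} \<le> card ?A" using vc_le[OF A(1)] A(2) by auto
    have a0: "mvc Su E \<le> card ?A" using minA[OF A(1)] .
    have b0: "mvc Sv E \<le> card ?B" using minB[OF B(1)] .
    show ?thesis
    proof (cases "w \<in> C")
      case False thus ?thesis using cc a1 b0 C by simp
    next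
      case True
      have bw: "mvcS Sv E {w} \<le> card ?B" using vc_le[OF B(1)] True wS by auto
      have "mvc V E \<le> card C" using minV[OF C(1)] .
      thus ?thesis using cc True a1 a0 b0 bw hyp C by (cases "card C = mvc V E") auto
    qed
  qed
  show "mvcS V E {u} = min (mvcS Su E {u} + mvc Sv E) (min (mvc Su E + mvcS Sv E {w}) (mvc V E + 1))"
    using u1 u2 u3 l1 by linarith
  have w1: "mvcS V E {u,v} \<le> mvcS Su E {u} + mvcS Sv E {v}"
  proof -
    have "is_vc V E (Au \<union> Bv)" using glue Au Bv by blast
    moreover have "card (Au \<union> Bv) \<le> card Au + card Bv" using cardU[OF sub[OF Au(1)] subv[OF Bv(1)]] by simp
    ultimately show ?thesis using vc_le[of V E "Au \<union> Bv" "{u,v}"] Au Bv by auto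
  qed
  have w2: "mvcS V E {u,v} \<le> mvc V E + 1"
  proof -
    have "u \<in> M \<or> v \<in> M" using M(1) uV vV Euv unfolding is_vc_def by blast
    hence "card (insert u (insert v M)) \<le> card M + 1" using finM by (auto simp: card_insert_if)
    moreover have "is_vc V E (insert u (insert v M))"
      by (rule vc_mono[OF M(1)]) (use isC[OF M(1)] uV vV in auto)
    ultimately show ?thesis using vc_le[of V E "insert u (insert v M)" "{u,v}"] M by auto
  qed
  have l3: "min (mvcS Su E {u} + mvcS Sv E {v}) (mvc V E + 1) \<le> mvcS V E {u,v}"
  proof -
    obtain C where C: "is_vc V E C" "u \<in> C" "v \<in> C" "card C = mvcS V E {u,v}" using ex(1)[of "{u,v}"] uV vV by auto
    let ?A = "C \<inter> Su" and ?B = "C \<inter> Sv"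
    have A: "is_vc Su E ?A" "u \<in> ?A" using restr[OF C(1) SuV] C uSu by auto
    have B: "is_vc Sv E ?B" "v \<in> ?B" using restr[OF C(1) SvV] C vSv by auto
    have cc: "card C + (if w\<in>C then 1 else 0) = card ?A + card ?B" using cardC[OF isC[OF C(1)]] .
    have a1: "mvcS Su E {u} \<le> card ?A" using vc_le[OF A(1)] A(2) by auto
    have b1: "mvcS Sv E {v} \<le> card ?B" using vc_le[OF B(1)] B(2) by auto
    have a0: "mvc Su E \<le> card ?A" using minA[OF A(1)] .
    have b0: "mvc Sv E \<le> card ?B" using minB[OF B(1)] .
    have mV: "mvc V E \<le> card C" using minV[OF C(1)] .
    show ?thesis
    proof (cases "w \<in> C")
      case False thus ?thesis using cc a1 b1 C by simp
    next
      case True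
      show ?thesis
      proof (cases "card C = mvc V E")
        case False thus ?thesis using mV C by simp
      next
        case eq: True
        have "card ?A = mvc Su E \<or> card ?B = mvc Sv E" using cc True eq hyp a0 b0 by auto
        thus ?thesis
        proof
          assume cA: "card ?A = mvc Su E"
          have "v \<in> B0"
          proof (rule ccontr)
            assume "v \<notin> B0"
            hence "w \<in> B0" using coverwv B0 by blast
            have g: "is_vc V E (?A \<union> B0)" using glue A B0 by blast
            have "card (?A \<union> B0) + 1 = card ?A + card B0"
              using cardU[OF sub[OF A(1)] subv[OF B0(1)]] True \<open>w \<in> B0\<close> wS by simp
            thus False using minV[OF g] hyp cA B0 by simp
          qed
          hence "mvcS Sv E {v} \<le> mvc Sv E" using vc_le[OF B0(1), of "{v}"] B0 by auto
          thus ?thesis using cA a1 hyp eq C by simp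
        next
          assume cB: "card ?B = mvc Sv E"
          have "u \<in> A0"
          proof (rule ccontr)
            assume "u \<notin> A0"
            hence "w \<in> A0" using coverw A0 by blast
            have g: "is_vc V E (A0 \<union> ?B)" using glue B A0 by blast
            have "card (A0 \<union> ?B) + 1 = card A0 + card ?B"
              using cardU[OF sub[OF A0(1)] subv[OF B(1)]] True \<open>w \<in> A0\<close> wS by simp
            thus False using minV[OF g] hyp cB A0 by simp
          qed
          hence "mvcS Su E {u} \<le> mvc Su E" using vc_le[OF A0(1), of "{u}"] A0 by auto
          thus ?thesis using cB b1 hyp eq C by simp
        qed
      qed
    qed
  qed
  show "mvcS V E {u,v} = min (mvcS Su E {u} + mvcS Sv E {v}) (mvc V E + 1)"
    using w1 w2 l3 by linarith
qed


lemma modsplit: fixes pu pv n :: nat assumes "pv = (pu+1) mod n" "pu < n" shows "(pu+1 < n \<and> pv = pu+1) \<or> (pu+1 = n \<and> pv = 0)"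
proof (cases "pu+1 < n")
  case True
  have "(pu+1) mod n = pu+1" using True by (rule mod_less)
  thus ?thesis using assms True by simp
next
  case False
  have "pu + 1 = n" using False assms by simp
  thus ?thesis using assms by simp
qed

lemma arA: fixes n :: nat assumes h: "pv = (pu+1) mod n" "pu<n" "pv<n" "pw<n" "pz<n" "pu\<noteq>pv" "pu\<noteq>pw" "pv\<noteq>pw" "pz\<noteq>pu" "pz\<noteq>pv" "pz\<noteq>pw"
  shows "(cbetw pu pz pw \<longleftrightarrow> cbetw pv pz pw)"
  using modsplit[OF h(1) h(2)] h(3-) unfolding cbetw_def by linarith

lemma arB: fixes n :: nat assumes h: "pv = (pu+1) mod n" "pu<n" "pv<n" "pw<n" "pu\<noteq>pv" "pu\<noteq>pw" "pv\<noteq>pw"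
  shows "cbetw pu pv pw \<and> \<not> cbetw pv pu pw"
  using modsplit[OF h(1) h(2)] h(3-) unfolding cbetw_def by linarith

lemma ar1: fixes n :: nat assumes h: "pv = (pu+1) mod n" "pu<n" "pv<n" "pw<n" "py<n" "pu\<noteq>pv" "pu\<noteq>pw" "pv\<noteq>pw" "py\<noteq>pu" "py\<noteq>pv" "py\<noteq>pw" "cbetw pv py pw"
  shows "cbetw pu pv py \<and> cbetw py pw pu"
  using modsplit[OF h(1) h(2)] h(3-) unfolding cbetw_def by linarith

lemma ar2: fixes n :: nat assumes h: "pv = (pu+1) mod n" "pu<n" "pv<n" "pw<n" "px<n" "pu\<noteq>pv" "pu\<noteq>pw" "pv\<noteq>pw" "px\<noteq>pu" "px\<noteq>pv" "px\<noteq>pw" "\<not> cbetw pu px pw"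
  shows "cbetw pu pv pw \<and> cbetw pw px pu"
  using modsplit[OF h(1) h(2)] h(3-) unfolding cbetw_def by linarith

lemma ar3: fixes n :: nat assumes h: "pv = (pu+1) mod n" "pu<n" "pv<n" "pw<n" "px<n" "py<n" "pu\<noteq>pv" "pu\<noteq>pw" "pv\<noteq>pw" "px\<noteq>pu" "px\<noteq>pv" "px\<noteq>pw" "py\<noteq>pu" "py\<noteq>pv" "py\<noteq>pw" "px \<noteq> py" "\<not> cbetw pu px pw" "cbetw pv py pw"
  shows "cbetw pu py pw \<and> cbetw pw px pu"
proof
  show "cbetw pu py pw" using arA[of pv pu n pw py] h by blast
  show "cbetw pw px pu" using h(8) h(10) h(12) h(17) unfolding cbetw_def by linarith
qed

lemma crossar: fixes a b c d :: nat
  assumes "\<not> (a < c \<and> c < b \<and> b < d)" "\<not> (c < b \<and> b < d \<and> d < a)"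
   "\<not> (b < d \<and> d < a \<and> a < c)" "\<not> (d < a \<and> a < c \<and> c < b)"
   "cbetw a c b" "cbetw b d a"
  shows False
  using assms unfolding cbetw_def by linarith

lemma cross:
  assumes emb: "outer_emb V E pos" and sym: "\<And>x y. E x y \<Longrightarrow> E y x"
    and V: "a\<in>V" "b\<in>V" "c\<in>V" "d\<in>V" and e: "E a b" "E c d"
    and cb: "cbetw (pos a) (pos c) (pos b)" "cbetw (pos b) (pos d) (pos a)"
  shows False
proof -
  have H: "\<forall>a\<in>V. \<forall>b\<in>V. \<forall>c\<in>V. \<forall>d\<in>V. E a b \<longrightarrow> E c d \<longrightarrow>
        \<not> (pos a < pos c \<and> pos c < pos b \<and> pos b < pos d)"
    using emb unfolding outer_emb_def by (rule conjunct2)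
  note nc = H[rule_format]
  have e': "E b a" "E d c" using e sym by auto
  note n1 = nc[OF V(1) V(2) V(3) V(4) e(1) e(2)]
  note n2 = nc[OF V(3) V(4) V(2) V(1) e(2) e'(1)]
  note n3 = nc[OF V(2) V(1) V(4) V(3) e'(1) e'(2)]
  note n4 = nc[OF V(4) V(3) V(1) V(2) e'(2) e(1)]
  show False using crossar[OF n1 n2 n3 n4 cb] .
qed

lemma geo:
  assumes sg: "simple_graph V E" and emb: "outer_emb V E pos"
    and uV: "u \<in> V" and vV: "v \<in> V" and wV: "w \<in> V"
    and Euv: "E u v" and Euw: "E u w" and Evw: "E v w"
    and pv: "pos v = (pos u + 1) mod card V"
  shows "seg_vertices V pos u w v \<subseteq> V \<and> seg_vertices V pos v w u \<subseteq> V
    \<and> seg_vertices V pos u w v \<union> seg_vertices V pos v w u = V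
    \<and> seg_vertices V pos u w v \<inter> seg_vertices V pos v w u = {w}
    \<and> (\<forall>x\<in>V. \<forall>y\<in>V. E x y \<longrightarrow> (x \<in> seg_vertices V pos u w v \<and> y \<in> seg_vertices V pos u w v)
         \<or> (x \<in> seg_vertices V pos v w u \<and> y \<in> seg_vertices V pos v w u) \<or> (x=u \<and> y=v) \<or> (x=v \<and> y=u))"
proof -
  let ?Su = "seg_vertices V pos u w v" and ?Sv = "seg_vertices V pos v w u"
  let ?n = "card V"
  have sym: "\<And>x y. E x y \<Longrightarrow> E y x" and irr: "\<And>x. \<not> E x x"
    using sg unfolding simple_graph_def by auto
  have bij: "bij_betw pos V {0..<?n}" using emb unfolding outer_emb_def by auto
  have inj: "\<And>x y. x\<in>V \<Longrightarrow> y\<in>V \<Longrightarrow> pos x = pos y \<Longrightarrow> x = y"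
    using bij unfolding bij_betw_def inj_on_def by blast
  have lt: "\<And>x. x\<in>V \<Longrightarrow> pos x < ?n" using bij unfolding bij_betw_def by auto
  have d: "u \<noteq> v" "u \<noteq> w" "v \<noteq> w" using irr Euv Euw Evw by auto
  have pd: "pos u \<noteq> pos v" "pos u \<noteq> pos w" "pos v \<noteq> pos w" using d inj uV vV wV by metis+
  have pdz: "pos z \<noteq> pos x" if "z \<in> V" "x\<in>V" "z \<noteq> x" for z x using inj that by metis
  have B: "cbetw (pos u) (pos v) (pos w) \<and> \<not> cbetw (pos v) (pos u) (pos w)"
    using arB[OF pv lt[OF uV] lt[OF vV] lt[OF wV] pd] .
  have A: "cbetw (pos u) (pos z) (pos w) \<longleftrightarrow> cbetw (pos v) (pos z) (pos w)"
    if "z \<in> V" "z \<noteq> u" "z \<noteq> v" "z \<noteq> w" for z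
    using arA[OF pv lt[OF uV] lt[OF vV] lt[OF wV] lt[OF that(1)] pd
        pdz[OF that(1) uV that(2)] pdz[OF that(1) vV that(3)] pdz[OF that(1) wV that(4)]] .
  have Su: "x \<in> ?Su \<longleftrightarrow> x = u \<or> x = w \<or> (x \<in> V \<and> x \<noteq> u \<and> x \<noteq> w \<and> \<not> cbetw (pos u) (pos x) (pos w))" for x
    using B unfolding seg_vertices_def by auto
  have Sv: "x \<in> ?Sv \<longleftrightarrow> x = v \<or> x = w \<or> (x \<in> V \<and> x \<noteq> v \<and> x \<noteq> w \<and> cbetw (pos v) (pos x) (pos w))" for x
    using B unfolding seg_vertices_def by auto
  have s1: "?Su \<subseteq> V" using Su uV wV by auto
  have s2: "?Sv \<subseteq> V" using Sv vV wV by auto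
  have s3: "?Su \<union> ?Sv = V"
  proof
    show "?Su \<union> ?Sv \<subseteq> V" using s1 s2 by blast
    show "V \<subseteq> ?Su \<union> ?Sv"
    proof
      fix z assume z: "z \<in> V"
      show "z \<in> ?Su \<union> ?Sv"
      proof (cases "z = u \<or> z = v \<or> z = w")
        case True thus ?thesis using Su Sv by blast
      next
        case False thus ?thesis using A[OF z] z Su Sv by blast
      qed
    qed
  qed
  have s4: "?Su \<inter> ?Sv = {w}"
  proof
    show "{w} \<subseteq> ?Su \<inter> ?Sv" using Su Sv by blast
    show "?Su \<inter> ?Sv \<subseteq> {w}"
    proof
      fix z assume z: "z \<in> ?Su \<inter> ?Sv"
      show "z \<in> {w}"
      proof (rule ccontr)
        assume nw: "z \<notin> {w}"
        have "z \<noteq> u" using z nw Sv B d by blast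
        moreover have "z \<noteq> v" using z nw Su B d by auto
        ultimately show False using z nw Su Sv A by blast
      qed
    qed
  qed
  have cr: False if "x \<in> ?Su" "x \<noteq> w" "y \<in> ?Sv" "y \<noteq> w" "E x y" "\<not> (x = u \<and> y = v)" for x y
  proof -
    have xV: "x \<in> V" and yV: "y \<in> V" using that s1 s2 by auto
    have xv: "x \<noteq> v" using that(1,2) s4 Sv by blast
    have yu: "y \<noteq> u" using that(3,4) s4 Su by blast
    show False
    proof (cases "x = u")
      case True
      hence y: "y \<noteq> v" "cbetw (pos v) (pos y) (pos w)" using that Sv by auto
      have "cbetw (pos u) (pos v) (pos y) \<and> cbetw (pos y) (pos w) (pos u)"
        using ar1[OF pv lt[OF uV] lt[OF vV] lt[OF wV] lt[OF yV] pd pdz[OF yV uV yu]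
            pdz[OF yV vV y(1)] pdz[OF yV wV that(4)] y(2)] .
      thus False using cross[OF emb sym uV yV vV wV _ Evw] that(5) True by blast
    next
      case False
      hence x: "\<not> cbetw (pos u) (pos x) (pos w)" using that Su by auto
      show False
      proof (cases "y = v")
        case True
        have "cbetw (pos u) (pos v) (pos w) \<and> cbetw (pos w) (pos x) (pos u)"
          using ar2[OF pv lt[OF uV] lt[OF vV] lt[OF wV] lt[OF xV] pd pdz[OF xV uV False]
              pdz[OF xV vV xv] pdz[OF xV wV that(2)] x] .
        thus False using cross[OF emb sym uV wV vV xV Euw] that(5) True sym by blast
      next
        case yv: False
        hence y: "cbetw (pos v) (pos y) (pos w)" using that Sv by auto
        have xy: "x \<noteq> y" using that(1,2,3) s4 by blast
        have "cbetw (pos u) (pos y) (pos w) \<and> cbetw (pos w) (pos x) (pos u)"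
          using ar3[OF pv lt[OF uV] lt[OF vV] lt[OF wV] lt[OF xV] lt[OF yV] pd pdz[OF xV uV False]
              pdz[OF xV vV xv] pdz[OF xV wV that(2)] pdz[OF yV uV yu] pdz[OF yV vV yv]
              pdz[OF yV wV that(4)] pdz[OF xV yV xy] x y] .
        thus False using cross[OF emb sym uV wV yV xV Euw] that(5) sym by blast
      qed
    qed
  qed
  have s5: "\<forall>x\<in>V. \<forall>y\<in>V. E x y \<longrightarrow> (x \<in> ?Su \<and> y \<in> ?Su)
         \<or> (x \<in> ?Sv \<and> y \<in> ?Sv) \<or> (x=u \<and> y=v) \<or> (x=v \<and> y=u)"
  proof (intro ballI impI)
    fix x y assume xV: "x \<in> V" and yV: "y \<in> V" and e: "E x y"
    show "(x \<in> ?Su \<and> y \<in> ?Su) \<or> (x \<in> ?Sv \<and> y \<in> ?Sv) \<or> (x=u \<and> y=v) \<or> (x=v \<and> y=u)"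
    proof (rule ccontr)
      assume c: "\<not> ?thesis"
      have "(x \<in> ?Su \<and> x \<noteq> w \<and> y \<in> ?Sv \<and> y \<noteq> w) \<or> (y \<in> ?Su \<and> y \<noteq> w \<and> x \<in> ?Sv \<and> x \<noteq> w)"
        using c xV yV s3 s4 by blast
      thus False
      proof
        assume "x \<in> ?Su \<and> x \<noteq> w \<and> y \<in> ?Sv \<and> y \<noteq> w"
        thus False using cr[of x y] e c by blast
      next
        assume "y \<in> ?Su \<and> y \<noteq> w \<and> x \<in> ?Sv \<and> x \<noteq> w"
        thus False using cr[of y x] e sym c by blast
      qed
    qed
  qed
  show ?thesis using s1 s2 s3 s4 s5 by blast
qed


lemma comb_all:
  assumes fin: "finite V" and SuV: "Su \<subseteq> V" and SvV: "Sv \<subseteq> V" and un: "Su \<union> Sv = V"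
    and int: "Su \<inter> Sv = {w}" and uSu: "u \<in> Su" and vSv: "v \<in> Sv" and uw: "u \<noteq> w" and vw: "v \<noteq> w"
    and Euw: "E u w" and Evw: "E v w" and Euv: "E u v" and sym: "\<And>x y. E x y \<Longrightarrow> E y x"
    and edges: "\<forall>x\<in>V. \<forall>y\<in>V. E x y \<longrightarrow> (x\<in>Su \<and> y\<in>Su) \<or> (x\<in>Sv \<and> y\<in>Sv) \<or> (x=u \<and> y=v) \<or> (x=v \<and> y=u)"
    and hyp: "mvc V E = mvc Su E + mvc Sv E"
  shows "mvcS V E {u} = min (mvcS Su E {u} + mvc Sv E) (min (mvc Su E + mvcS Sv E {w}) (mvc V E + 1))
       \<and> mvcS V E {v} = min (mvc Su E + mvcS Sv E {v}) (min (mvcS Su E {w} + mvc Sv E) (mvc V E + 1))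
       \<and> mvcS V E {u, v} = min (mvcS Su E {u} + mvcS Sv E {v}) (mvc V E + 1)"
proof -
  note r = comb1[OF fin SuV SvV un int uSu vSv uw vw Euw Evw Euv edges hyp]
  have edges': "\<forall>x\<in>V. \<forall>y\<in>V. E x y \<longrightarrow> (x\<in>Sv \<and> y\<in>Sv) \<or> (x\<in>Su \<and> y\<in>Su) \<or> (x=v \<and> y=u) \<or> (x=u \<and> y=v)"
    using edges by blast
  have r2: "mvcS V E {v} = min (mvcS Sv E {v} + mvc Su E) (min (mvc Sv E + mvcS Su E {w}) (mvc V E + 1))"
    using comb1(1)[of V Sv Su w v u E, OF fin SvV SuV _ _ vSv uSu vw uw Evw Euw sym[OF Euv] edges'] un int hyp
    by (simp add: Un_commute Int_commute add.commute)
  show ?thesis using r r2 by (simp add: add.commute)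
qed

theorem lemma3:
  fixes V :: "'a set" and E :: "'a \<Rightarrow> 'a \<Rightarrow> bool" and pos :: "'a \<Rightarrow> nat" and u v w :: 'a
  assumes mop: "maximal_outerplanar V E"
    and card4: "card V \<ge> 4"
    and emb: "outer_emb V E pos"
    and uV: "u \<in> V" and vV: "v \<in> V" and uv: "E u v"
    and outer: "outer_edge V pos u v"
    and degu: "degree V E u > 2" and degv: "degree V E v > 2"
    and wV: "w \<in> V" and uw: "E u w" and vw: "E v w"
    and hyp: "mvc V E = mvc (seg_vertices V pos u w v) E + mvc (seg_vertices V pos v w u) E"
  shows "mvcS V E {u} = min (mvcS (seg_vertices V pos u w v) E {u} + mvc (seg_vertices V pos v w u) E)
                          (min (mvc (seg_vertices V pos u w v) E + mvcS (seg_vertices V pos v w u) E {w})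
                               (mvc V E + 1))
       \<and> mvcS V E {v} = min (mvc (seg_vertices V pos u w v) E + mvcS (seg_vertices V pos v w u) E {v})
                          (min (mvcS (seg_vertices V pos u w v) E {w} + mvc (seg_vertices V pos v w u) E)
                               (mvc V E + 1))
       \<and> mvcS V E {u, v} = min (mvcS (seg_vertices V pos u w v) E {u} + mvcS (seg_vertices V pos v w u) E {v})
                             (mvc V E + 1)"
proof -
  let ?Su = "seg_vertices V pos u w v" and ?Sv = "seg_vertices V pos v w u"
  have sg: "simple_graph V E" using mop unfolding maximal_outerplanar_def by blast
  have fin: "finite V" and sym: "\<And>x y. E x y \<Longrightarrow> E y x" and irr: "\<And>x. \<not> E x x"
    using sg unfolding simple_graph_def by auto
  have d: "u \<noteq> w" "v \<noteq> w" using irr uw vw by auto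
  have S: "?Su \<subseteq> V \<and> ?Sv \<subseteq> V \<and> ?Su \<union> ?Sv = V \<and> ?Su \<inter> ?Sv = {w}
    \<and> (\<forall>x\<in>V. \<forall>y\<in>V. E x y \<longrightarrow> (x \<in> ?Su \<and> y \<in> ?Su)
         \<or> (x \<in> ?Sv \<and> y \<in> ?Sv) \<or> (x=u \<and> y=v) \<or> (x=v \<and> y=u))"
  proof (cases "pos v = (pos u + 1) mod card V")
    case True thus ?thesis using geo[OF sg emb uV vV wV uv uw vw] by blast
  next
    case False
    hence "pos u = (pos v + 1) mod card V" using outer unfolding outer_edge_def by blast
    hence g: "?Sv \<subseteq> V \<and> ?Su \<subseteq> V \<and> ?Sv \<union> ?Su = V \<and> ?Sv \<inter> ?Su = {w}
    \<and> (\<forall>x\<in>V. \<forall>y\<in>V. E x y \<longrightarrow> (x \<in> ?Sv \<and> y \<in> ?Sv)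
         \<or> (x \<in> ?Su \<and> y \<in> ?Su) \<or> (x=v \<and> y=u) \<or> (x=u \<and> y=v))"
      using geo[OF sg emb vV uV wV sym[OF uv] vw uw] by blast
    show ?thesis
    proof (intro conjI)
      show "?Su \<subseteq> V" "?Sv \<subseteq> V" using g by blast+
      show "?Su \<union> ?Sv = V" "?Su \<inter> ?Sv = {w}" using g by blast+
      show "\<forall>x\<in>V. \<forall>y\<in>V. E x y \<longrightarrow> (x \<in> ?Su \<and> y \<in> ?Su)
         \<or> (x \<in> ?Sv \<and> y \<in> ?Sv) \<or> (x=u \<and> y=v) \<or> (x=v \<and> y=u)"
        using g by blast
    qed
  qed
  have uSu: "u \<in> ?Su" and vSv: "v \<in> ?Sv" unfolding seg_vertices_def by auto
  show ?thesis
    using comb_all[of V ?Su ?Sv w u v E] S fin uSu vSv d uw vw uv sym hyp by blast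
qed

end
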